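(* Let $a\in\mathbb{R}$ and, for $\theta\in(2\pi/3,\pi)$ with $1-4a\cos^2\theta\neq0$, define \[ \zeta(\theta)=\frac{(2a-1)\cos\theta+\sqrt{(1-4a)\cos^2\theta+a}}{1-4a\cos^2\theta}. \] Then $|\zeta(\theta)|>1$ for every $a\in(-1,1/3)$ and every $\theta\in(2\pi/3,\pi)$ with $1-4a\cos^2\theta\neq0$.
   Context: For $a\in(-1,1/3)$ and $\theta\in(2\pi/3,\pi)$ the radicand $(1-4a)\cos^2\theta+a$ is positive, so $\zeta(\theta)$ is real. *)

theory Defs
  imports Complex_Main
begin

definition zeta :: "real \<Rightarrow> real \<Rightarrow> real" where
  "zeta a \<theta> = ((2*a - 1) * cos \<theta> + sqrt ((1 - 4*a) * (cos \<theta>)^2 + a))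
                 / (1 - 4*a*(cos \<theta>)^2)"

end

theory Submission
  imports Defs
begin

lemma key:
  fixes a u s :: real
  assumes "-1 < a" "a < 1/3" "1/2 < u" "u < 1"
    and D: "1 - 4*a*u^2 \<noteq> 0"
    and s0: "s \<ge> 0" and s2: "s^2 = (1-4*a)*u^2 + a"
  shows "\<bar>((1-2*a)*u + s) / (1 - 4*a*u^2)\<bar> > 1"
proof -
  define B where "B = (1-2*a)*u"
  define Dd where "Dd = 1 - 4*a*u^2"
  have ss: "s^2 = B^2 + a*Dd" unfolding B_def Dd_def s2 by (simp add: power2_eq_square algebra_simps)
  have Bpos: "B > 0" unfolding B_def using assms by (simp add: mult_pos_pos)
  have f1: "1 + a*(2*u-1) > 0"
  proof (cases "a \<ge> 0")
    case True then show ?thesis using assms by (simp add: add_pos_nonneg)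
  next
    case False
    have "a*(2*u-1) > -1*(2*u-1)" using False assms by (intro mult_strict_right_mono) auto
    moreover have "-1*(2*u-1) = 1 - 2*u" by simp
    ultimately show ?thesis using assms by linarith
  qed
  have f2: "1 - a*(1+2*u) > 0"
  proof (cases "a \<ge> 0")
    case True
    have "a*(1+2*u) \<le> a*3" using True assms by (intro mult_left_mono) auto
    then show ?thesis using assms by linarith
  next
    case False
    hence "a*(1+2*u) \<le> 0" using assms by (intro mult_nonpos_nonneg) auto
    then show ?thesis by linarith
  qed
  have p1: "Dd - 2*B - a = (1-2*u)*(1 + a*(2*u-1))" unfolding B_def Dd_def by (simp add: algebra_simps power2_eq_square)
  have pm1: "Dd + 2*B - a = (1+2*u)*(1 - a*(1+2*u))" unfolding B_def Dd_def by (simp add: algebra_simps power2_eq_square)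
  have gt: "s^2 > (\<bar>Dd\<bar> - B)^2"
  proof (cases "Dd > 0")
    case True
    have "Dd - 2*B - a < 0" unfolding p1 using f1 assms by (simp add: mult_neg_pos)
    hence "Dd * (Dd - 2*B - a) < 0" using True by (simp add: mult_pos_neg)
    moreover have "s^2 - (Dd - B)^2 = - (Dd * (Dd - 2*B - a))" unfolding ss by (simp add: power2_eq_square algebra_simps)
    ultimately have "s^2 - (Dd - B)^2 > 0" by linarith
    then show ?thesis using True by simp
  next
    case False
    hence Dn: "Dd < 0" using D Dd_def by auto
    have "Dd + 2*B - a > 0" unfolding pm1 using f2 assms by simp
    hence "Dd * (Dd + 2*B - a) < 0" using Dn by (simp add: mult_neg_pos)
    moreover have "s^2 - (Dd + B)^2 = - (Dd * (Dd + 2*B - a))" unfolding ss by (simp add: power2_eq_square algebra_simps)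
    ultimately have "s^2 - (Dd + B)^2 > 0" by linarith
    then show ?thesis using Dn by (simp add: power2_eq_square algebra_simps)
  qed
  have "s > \<bar>Dd\<bar> - B"
  proof (rule ccontr)
    assume "\<not> ?thesis"
    hence "s \<le> \<bar>Dd\<bar> - B" by simp
    hence "s^2 \<le> (\<bar>Dd\<bar> - B)^2" using s0 by (intro power_mono) auto
    with gt show False by simp
  qed
  hence N: "B + s > \<bar>Dd\<bar>" by simp
  have "\<bar>Dd\<bar> > 0" using D Dd_def by simp
  hence "\<bar>(B + s) / Dd\<bar> = (B+s) / \<bar>Dd\<bar>" using N by (simp add: abs_div)
  also have "\<dots> > 1" using N \<open>\<bar>Dd\<bar> > 0\<close> by simp
  finally show ?thesis unfolding B_def Dd_def .
qed

theorem lemma2p5: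
  fixes a \<theta> :: real
  assumes "-1 < a" and "a < 1/3"
    and "2*pi/3 < \<theta>" and "\<theta> < pi"
    and "1 - 4*a*(cos \<theta>)^2 \<noteq> 0"
  shows "\<bar>zeta a \<theta>\<bar> > 1"
proof -
  define u where "u = - cos \<theta>"
  have "cos \<theta> < cos (2*pi/3)" using assms pi_gt_zero
    by (subst cos_mono_less_eq) auto
  hence u1: "u > 1/2" unfolding u_def cos_120 by simp
  have "cos pi < cos \<theta>" using assms pi_gt_zero
    by (subst cos_mono_less_eq) auto
  hence u2: "u < 1" unfolding u_def by simp
  have c2: "(cos \<theta>)^2 = u^2" unfolding u_def by simp
  have rad: "(1 - 4*a) * u^2 + a \<ge> 0"
  proof -
    have "(1/2)^2 \<le> u^2" using u1 by (intro power_mono) auto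
    hence "u^2 \<ge> 1/4" by (simp add: power2_eq_square)
    have "u^2 \<le> 1^2" using u1 u2 by (intro power_mono) auto
    hence "u^2 \<le> 1" by simp
    show ?thesis
    proof (cases "a \<ge> 0")
      case True
      show ?thesis
      proof (cases "1 - 4*a \<ge> 0")
        case True
        then show ?thesis using \<open>a \<ge> 0\<close> by simp
      next
        case False
        have "(1-4*a)*u^2 \<ge> (1-4*a)*1" using False \<open>u^2 \<le> 1\<close> by (intro mult_left_mono_neg) auto
        then show ?thesis using assms by simp
      qed
    next
      case False
      have "(1-4*a)*u^2 \<ge> (1-4*a)*(1/4)" using False \<open>u^2 \<ge> 1/4\<close> by (intro mult_left_mono) auto
      then show ?thesis by simp
    qed
  qed
  have "zeta a \<theta> = ((1-2*a)*u + sqrt ((1-4*a)*u^2 + a)) / (1 - 4*a*u^2)"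
    unfolding zeta_def c2 u_def by (simp add: algebra_simps)
  moreover have "\<bar>((1-2*a)*u + sqrt ((1-4*a)*u^2 + a)) / (1 - 4*a*u^2)\<bar> > 1"
    using assms(5) c2 rad by (intro key[OF assms(1,2) u1 u2]) auto
  ultimately show ?thesis by simp
qed

end
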